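(* If the $n$th order ODE $x_n=F(t,x,x_1,\ldots,x_{n-1})$ is invariant under a telescopic vector field $\tau^{(n)}=\alpha\partial_t+\beta\partial_x+\sum_{i=1}^n\gamma^{(i)}\partial_{x_i}$ (i.e. $\tau^{(n)}$ is tangent to the submanifold $\{x_n=F\}$), then the vector field $\mathbf{X}=\partial_x$ is a generalized $\lambda$-symmetry of the equation for the function $\lambda=\frac{\gamma^{(1)}-\alpha x_2}{\beta-\alpha x_1}\in C^\infty(M^{(2)})$, i.e. $\mathbf{X}^{[\lambda,(n)]}$ is tangent to $\{x_n=F\}$.
   Context: Jet coordinates $(t,x,x_1,x_2,\ldots)$ on $M^{(k)}$, $x_i=d^ix/dt^i$; $D_t$ the total derivative. A telescopic vector field is $\tau^{(k)}=\alpha(t,x,x_1)\partial_t+\beta(t,x,x_1)\partial_x+\sum_{i=1}^k\gamma^{(i)}\partial_{x_i}$ with $\alpha,\beta,\gamma^{(1)}$ arbitrary smooth functions of $(t,x,x_1)$, $\beta-\alpha x_1\neq 0$, and for $2\le i\le k$: $\gamma^{(i)}=D_t(\gamma^{(i-1)})-D_t(\alpha)x_i+\frac{\gamma^{(1)}+x_1D_t\alpha-D_t\beta}{\beta-x_1\alpha}(\gamma^{(i-1)}-\alpha x_i)$. For a function $\lambda$ depending on finitely many jet variables and $\mathbf{X}=\rho(t,x)\partial_t+\phi^0(t,x)\partial_x$, the (generalized) $\lambda$-prolongation is $\mathbf{X}^{[\lambda,(k)]}=\rho\partial_t+\phi^0\partial_x+\sum_{i=1}^k\phi^{[\lambda,(i)]}\partial_{x_i}$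 with $\phi^{[\lambda,(0)]}=\phi^0$, $\phi^{[\lambda,(i)]}=D_t(\phi^{[\lambda,(i-1)]})-D_t(\rho)x_i+\lambda(\phi^{[\lambda,(i-1)]}-\rho x_i)$. *)

theory Defs
  imports "HOL-Analysis.Analysis"
begin

text \<open>A point of the jet space is a pair (t, u) with u 0 = x and u i = x_i.
  Functions on the jet space are functions of t and u (depending on finitely many u i).\<close>

type_synonym jfun = "real \<Rightarrow> (nat \<Rightarrow> real) \<Rightarrow> real"

definition depends_upto :: "nat \<Rightarrow> jfun \<Rightarrow> bool" where
  "depends_upto N f \<longleftrightarrow> (\<forall>t u v. (\<forall>i\<le>N. u i = v i) \<longrightarrow> f t u = f t v)"

definition pt :: "jfun \<Rightarrow> jfun" where
  "pt f = (\<lambda>t u. deriv (\<lambda>s. f s u) t)"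

definition px :: "nat \<Rightarrow> jfun \<Rightarrow> jfun" where
  "px i f = (\<lambda>t u. deriv (\<lambda>s. f t (u(i := s))) (u i))"

definition Dt :: "jfun \<Rightarrow> jfun" where
  "Dt f = (\<lambda>t u. pt f t u + (\<Sum>i. u (Suc i) * px i f t u))"

text \<open>Smoothness: jointly continuous, all first partial derivatives exist and are again smooth
  (so all iterated partial derivatives exist and are continuous).\<close>
coinductive jsmooth :: "jfun \<Rightarrow> bool" where
  "\<lbrakk> continuous_on UNIV (\<lambda>p. f (fst p) (snd p));
     \<forall>t u. (\<lambda>s. f s u) differentiable (at t);
     \<forall>i t u. (\<lambda>s. f t (u(i := s))) differentiable (at (u i));
     jsmooth (pt f);
     \<forall>i. jsmooth (px i f) \<rbrakk> \<Longrightarrow> jsmooth f"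

definition lift3 :: "(real \<Rightarrow> real \<Rightarrow> real \<Rightarrow> real) \<Rightarrow> jfun" where
  "lift3 g = (\<lambda>t u. g t (u 0) (u 1))"

text \<open>Coefficients of the telescopic vector field: index 0 gives beta (coefficient of d_x),
  index i \<ge> 1 gives gamma^(i).\<close>
fun tele :: "jfun \<Rightarrow> jfun \<Rightarrow> jfun \<Rightarrow> nat \<Rightarrow> jfun" where
  "tele a b g1 0 = b"
| "tele a b g1 (Suc 0) = g1"
| "tele a b g1 (Suc (Suc k)) = (\<lambda>t u.
      Dt (tele a b g1 (Suc k)) t u - Dt a t u * u (Suc (Suc k))
      + (g1 t u + u 1 * Dt a t u - Dt b t u) / (b t u - u 1 * a t u)
        * (tele a b g1 (Suc k) t u - a t u * u (Suc (Suc k))))"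

fun lprol :: "jfun \<Rightarrow> jfun \<Rightarrow> jfun \<Rightarrow> nat \<Rightarrow> jfun" where
  "lprol rho phi0 lam 0 = phi0"
| "lprol rho phi0 lam (Suc i) = (\<lambda>t u.
      Dt (lprol rho phi0 lam i) t u - Dt rho t u * u (Suc i)
      + lam t u * (lprol rho phi0 lam i t u - rho t u * u (Suc i)))"

definition annihilates_on :: "nat \<Rightarrow> jfun \<Rightarrow> jfun \<Rightarrow> (nat \<Rightarrow> jfun)
    \<Rightarrow> (real \<times> (nat \<Rightarrow> real)) set \<Rightarrow> bool" where
  "annihilates_on n F a b S \<longleftrightarrow>
     (\<forall>(t, u) \<in> S. b n t u = a t u * pt F t u + (\<Sum>i<n. b i t u * px i F t u))"

definition eq_surface :: "nat \<Rightarrow> jfun \<Rightarrow> (real \<times> (nat \<Rightarrow> real)) set" where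
  "eq_surface n F = {(t, u). u n = F t u}"

text \<open>The equation together with its first differential consequence x_{n+1} = D_t F.\<close>
definition eq_surface_prol :: "nat \<Rightarrow> jfun \<Rightarrow> (real \<times> (nat \<Rightarrow> real)) set" where
  "eq_surface_prol n F = {(t, u). u n = F t u \<and> u (Suc n) = Dt F t u}"

end

theory Submission
  imports Defs
begin

lemma dd: "(h::real\<Rightarrow>real) differentiable at x \<Longrightarrow> (h has_real_derivative deriv h x) (at x)"
  using DERIV_deriv_iff_real_differentiable by blast

lemma rd: "((h::real\<Rightarrow>real) has_real_derivative D) (at x) \<Longrightarrow> h differentiable at x \<and> deriv h x = D"
  using real_differentiable_def DERIV_imp_deriv by blast

lemma d_add: "(h1::real\<Rightarrow>real) differentiable at x \<Longrightarrow> h2 differentiable at x \<Longrightarrow>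
  (\<lambda>s. h1 s + h2 s) differentiable at x \<and> deriv (\<lambda>s. h1 s + h2 s) x = deriv h1 x + deriv h2 x"
  by (intro rd DERIV_add dd)

lemma d_diff: "(h1::real\<Rightarrow>real) differentiable at x \<Longrightarrow> h2 differentiable at x \<Longrightarrow>
  (\<lambda>s. h1 s - h2 s) differentiable at x \<and> deriv (\<lambda>s. h1 s - h2 s) x = deriv h1 x - deriv h2 x"
  by (intro rd DERIV_diff dd)

lemma d_mult: "(h1::real\<Rightarrow>real) differentiable at x \<Longrightarrow> h2 differentiable at x \<Longrightarrow>
  (\<lambda>s. h1 s * h2 s) differentiable at x \<and> deriv (\<lambda>s. h1 s * h2 s) x = deriv h1 x * h2 x + h1 x * deriv h2 x"
  by (intro rd DERIV_cong[OF DERIV_mult[OF dd dd]]) (auto simp: algebra_simps)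

lemma d_div: "(h1::real\<Rightarrow>real) differentiable at x \<Longrightarrow> h2 differentiable at x \<Longrightarrow> h2 x \<noteq> 0 \<Longrightarrow>
  (\<lambda>s. h1 s / h2 s) differentiable at x \<and> deriv (\<lambda>s. h1 s / h2 s) x = (deriv h1 x * h2 x - h1 x * deriv h2 x) / (h2 x * h2 x)"
  by (intro rd DERIV_divide dd) (auto simp: power2_eq_square)

lemma d_const: "(\<lambda>s::real. c::real) differentiable at x \<and> deriv (\<lambda>s. c) x = 0"
  by (intro rd DERIV_const)

lemma d_id: "(\<lambda>s::real. s) differentiable at x \<and> deriv (\<lambda>s. s) x = 1"
  by (intro rd DERIV_ident)

definition dep :: "jfun \<Rightarrow> bool" where "dep f \<longleftrightarrow> (\<exists>N. depends_upto N f)"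
definition dift :: "jfun \<Rightarrow> bool" where "dift f \<longleftrightarrow> (\<forall>t u. (\<lambda>s. f s u) differentiable (at t))"
definition difx :: "jfun \<Rightarrow> bool" where
  "difx f \<longleftrightarrow> (\<forall>i t u. (\<lambda>s. f t (u(i := s))) differentiable (at (u i)))"

coinductive good :: "jfun \<Rightarrow> bool" where
  "dep f \<Longrightarrow> dift f \<Longrightarrow> difx f \<Longrightarrow> good (pt f) \<Longrightarrow> (\<forall>i. good (px i f)) \<Longrightarrow> good f"

inductive alg :: "jfun \<Rightarrow> bool" where
  base: "good f \<Longrightarrow> alg f"
| const: "alg (\<lambda>t u. c)"
| coord: "alg (\<lambda>t u. u k)"
| add: "alg f \<Longrightarrow> alg g \<Longrightarrow> alg (\<lambda>t u. f t u + g t u)"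
| diff: "alg f \<Longrightarrow> alg g \<Longrightarrow> alg (\<lambda>t u. f t u - g t u)"
| mult: "alg f \<Longrightarrow> alg g \<Longrightarrow> alg (\<lambda>t u. f t u * g t u)"
| div: "alg f \<Longrightarrow> alg g \<Longrightarrow> (\<forall>t u. g t u \<noteq> 0) \<Longrightarrow> alg (\<lambda>t u. f t u / g t u)"

lemma dep_mono: "depends_upto N f \<Longrightarrow> N \<le> M \<Longrightarrow> depends_upto M f"
  unfolding depends_upto_def by auto

lemma dep_bin: "dep f \<Longrightarrow> dep g \<Longrightarrow> dep (\<lambda>t u. h (f t u) (g t u))"
proof -
  assume "dep f" "dep g"
  then obtain N M where "depends_upto N f" "depends_upto M g" unfolding dep_def by auto
  then have "depends_upto (max N M) f" "depends_upto (max N M) g" by (auto intro: dep_mono)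
  then show ?thesis unfolding dep_def depends_upto_def by metis
qed

lemma pt_const: "pt (\<lambda>t u. c) = (\<lambda>t u. 0)"
  unfolding pt_def using d_const by auto
lemma px_const: "px i (\<lambda>t u. c) = (\<lambda>t u. 0)"
  unfolding px_def using d_const by auto
lemma pt_coord: "pt (\<lambda>t u. u k) = (\<lambda>t u. 0)"
  unfolding pt_def using d_const by auto
lemma px_coord: "px i (\<lambda>t u. u k) = (\<lambda>t u. if i = k then 1 else 0)"
  unfolding px_def using d_const d_id by (auto intro!: ext)
lemma difx_coord: "difx (\<lambda>t u. u k)"
  unfolding difx_def
proof (intro allI)
  fix i t u
  show "(\<lambda>s. (u(i := s)) k) differentiable at (u i)"
    by (cases "i = k") (simp_all add: d_const d_id)
qed

lemma bin_rule:
  assumes dif: "\<And>x h1 h2. (h1::real\<Rightarrow>real) differentiable at x \<Longrightarrow> h2 differentiable at x \<Longrightarrow> P h1 h2 x \<Longrightarrow>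
     (\<lambda>s. op (h1 s) (h2 s)) differentiable at x \<and> deriv (\<lambda>s. op (h1 s) (h2 s)) x = R (h1 x) (h2 x) (deriv h1 x) (deriv h2 x)"
   and f: "dift f" "difx f" and g: "dift g" "difx g"
   and P: "\<And>t u i. P (\<lambda>s. f s u) (\<lambda>s. g s u) t \<and> P (\<lambda>s. f t (u(i := s))) (\<lambda>s. g t (u(i := s))) (u i)"
  shows "dift (\<lambda>t u. op (f t u) (g t u))" "difx (\<lambda>t u. op (f t u) (g t u))"
    "pt (\<lambda>t u. op (f t u) (g t u)) = (\<lambda>t u. R (f t u) (g t u) (pt f t u) (pt g t u))"
    "px i (\<lambda>t u. op (f t u) (g t u)) = (\<lambda>t u. R (f t u) (g t u) (px i f t u) (px i g t u))"
  using f g P dif unfolding dift_def difx_def pt_def px_def by (auto intro!: ext)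

definition props :: "jfun \<Rightarrow> bool" where
  "props f \<longleftrightarrow> dep f \<and> dift f \<and> difx f \<and> alg (pt f) \<and> (\<forall>i. alg (px i f))"

lemma coord_case: "props (\<lambda>t u. u k)"
proof -
  have c1: "alg (px i (\<lambda>t u. u k))" for i unfolding px_coord by (rule alg.const)
  have c2: "alg (pt (\<lambda>t u. u k))" unfolding pt_coord by (rule alg.const)
  have c3: "dep (\<lambda>t u. u k)" unfolding dep_def depends_upto_def by (meson order_refl)
  have c4: "dift (\<lambda>t u. u k)" unfolding dift_def by (simp add: d_const)
  show ?thesis unfolding props_def using c1 c2 c3 c4 difx_coord by simp
qed

lemma const_case: "props (\<lambda>t u. c)"
proof -
  have "dep (\<lambda>t u. c)" unfolding dep_def depends_upto_def by simp
  moreover have "dift (\<lambda>t u. c)" "difx (\<lambda>t u. c)" unfolding dift_def difx_def by (simp_all add: d_const)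
  moreover have "alg (pt (\<lambda>t u. c))" "alg (px i (\<lambda>t u. c))" for i
    unfolding pt_const px_const by (rule alg.const)+
  ultimately show ?thesis unfolding props_def by simp
qed

lemma good_D: "good f \<Longrightarrow> dep f \<and> dift f \<and> difx f \<and> good (pt f) \<and> (\<forall>i. good (px i f))"
  by (erule good.cases) simp

lemma base_case: "good f \<Longrightarrow> props f"
  unfolding props_def using good_D alg.base by blast

lemma add_rule:
  assumes f: "dift f" "difx f" and g: "dift g" "difx g" 
  shows "dift (\<lambda>t u. f t u + g t u)" "difx (\<lambda>t u. f t u + g t u)"
    "pt (\<lambda>t u. f t u + g t u) = (\<lambda>t u. pt f t u + pt g t u)"
    "px i (\<lambda>t u. f t u + g t u) = (\<lambda>t u. px i f t u + px i g t u)"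
  using f g  d_add unfolding dift_def difx_def pt_def px_def by (auto intro!: ext)
lemma diff_rule:
  assumes f: "dift f" "difx f" and g: "dift g" "difx g" 
  shows "dift (\<lambda>t u. f t u - g t u)" "difx (\<lambda>t u. f t u - g t u)"
    "pt (\<lambda>t u. f t u - g t u) = (\<lambda>t u. pt f t u - pt g t u)"
    "px i (\<lambda>t u. f t u - g t u) = (\<lambda>t u. px i f t u - px i g t u)"
  using f g  d_diff unfolding dift_def difx_def pt_def px_def by (auto intro!: ext)
lemma mult_rule:
  assumes f: "dift f" "difx f" and g: "dift g" "difx g" 
  shows "dift (\<lambda>t u. f t u * g t u)" "difx (\<lambda>t u. f t u * g t u)"
    "pt (\<lambda>t u. f t u * g t u) = (\<lambda>t u. pt f t u * g t u + f t u * pt g t u)"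
    "px i (\<lambda>t u. f t u * g t u) = (\<lambda>t u. px i f t u * g t u + f t u * px i g t u)"
  using f g  d_mult unfolding dift_def difx_def pt_def px_def by (auto intro!: ext)
lemma div_rule:
  assumes f: "dift f" "difx f" and g: "dift g" "difx g" and nz: "\<forall>t u. g t u \<noteq> 0"
  shows "dift (\<lambda>t u. f t u / g t u)" "difx (\<lambda>t u. f t u / g t u)"
    "pt (\<lambda>t u. f t u / g t u) = (\<lambda>t u. (pt f t u * g t u - f t u * pt g t u) / (g t u * g t u))"
    "px i (\<lambda>t u. f t u / g t u) = (\<lambda>t u. (px i f t u * g t u - f t u * px i g t u) / (g t u * g t u))"
  using f g nz d_div unfolding dift_def difx_def pt_def px_def by (auto intro!: ext)

lemma add_case: assumes "props f" "props g" shows "props (\<lambda>t u. f t u + g t u)"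
proof -
  have fg: "dift f" "difx f" "dift g" "difx g" "dep f" "dep g" "alg (pt f)" "alg (pt g)"
    "\<And>i. alg (px i f)" "\<And>i. alg (px i g)" using assms unfolding props_def by blast+
  note r = add_rule[OF fg(1-4)]
  have "dep (\<lambda>t u. f t u + g t u)" using fg dep_bin[of f g "(+)"] by blast
  moreover have "alg (pt (\<lambda>t u. f t u + g t u))" "alg (px i (\<lambda>t u. f t u + g t u))" for i
    unfolding r(3,4) by (intro alg.add fg)+
  ultimately show ?thesis unfolding props_def using r(1,2) by simp
qed

lemma diff_case: assumes "props f" "props g" shows "props (\<lambda>t u. f t u - g t u)"
proof -
  have fg: "dift f" "difx f" "dift g" "difx g" "dep f" "dep g" "alg (pt f)" "alg (pt g)"
    "\<And>i. alg (px i f)" "\<And>i. alg (px i g)" using assms unfolding props_def by blast+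
  note r = diff_rule[OF fg(1-4)]
  have "dep (\<lambda>t u. f t u - g t u)" using fg dep_bin[of f g "(-)"] by blast
  moreover have "alg (pt (\<lambda>t u. f t u - g t u))" "alg (px i (\<lambda>t u. f t u - g t u))" for i
    unfolding r(3,4) by (intro alg.diff fg)+
  ultimately show ?thesis unfolding props_def using r(1,2) by simp
qed

lemma mult_case: assumes "props f" "props g" "alg f" "alg g" shows "props (\<lambda>t u. f t u * g t u)"
proof -
  have fg: "dift f" "difx f" "dift g" "difx g" "dep f" "dep g" "alg (pt f)" "alg (pt g)"
    "\<And>i. alg (px i f)" "\<And>i. alg (px i g)" using assms unfolding props_def by blast+
  note r = mult_rule[OF fg(1-4)]
  have "dep (\<lambda>t u. f t u * g t u)" using fg dep_bin[of f g "(*)"] by blast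
  moreover have "alg (pt (\<lambda>t u. f t u * g t u))" "alg (px i (\<lambda>t u. f t u * g t u))" for i
    unfolding r(3,4) by (intro alg.add alg.mult fg assms)+
  ultimately show ?thesis unfolding props_def using r(1,2) by simp
qed

lemma div_case: assumes "props f" "props g" "alg f" "alg g" and nz: "\<forall>t u. g t u \<noteq> 0"
  shows "props (\<lambda>t u. f t u / g t u)"
proof -
  have fg: "dift f" "difx f" "dift g" "difx g" "dep f" "dep g" "alg (pt f)" "alg (pt g)"
    "\<And>i. alg (px i f)" "\<And>i. alg (px i g)" using assms unfolding props_def by blast+
  have P: "\<And>t u i. (\<lambda>s. g s u) t \<noteq> 0 \<and> (\<lambda>s. g t (u(i:=s))) (u i) \<noteq> 0" using nz by simp
  have r: "dift (\<lambda>t u. f t u / g t u)" "difx (\<lambda>t u. f t u / g t u)"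
    "pt (\<lambda>t u. f t u / g t u) = (\<lambda>t u. (pt f t u * g t u - f t u * pt g t u) / (g t u * g t u))"
    "\<And>i. px i (\<lambda>t u. f t u / g t u) = (\<lambda>t u. (px i f t u * g t u - f t u * px i g t u) / (g t u * g t u))"
    using div_rule[OF fg(1-4) nz] by simp_all
  have nz2: "\<forall>t u. g t u * g t u \<noteq> 0" using nz by simp
  have "dep (\<lambda>t u. f t u / g t u)" using fg dep_bin[of f g "(/)"] by blast
  moreover have "alg (pt (\<lambda>t u. f t u / g t u))" "alg (px i (\<lambda>t u. f t u / g t u))" for i
    unfolding r(3,4) by (intro alg.div alg.mult alg.diff fg assms nz2)+
  ultimately show ?thesis unfolding props_def using r(1,2) by simp
qed

lemma alg_props: "alg f \<Longrightarrow> props f"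
proof (induction rule: alg.induct)
  case (base f) then show ?case by (rule base_case)
next
  case (const c) show ?case by (rule const_case)
next
  case (coord k) show ?case by (rule coord_case)
next
  case (add f g) then show ?case by (intro add_case)
next
  case (diff f g) then show ?case by (intro diff_case)
next
  case (mult f g) then show ?case by (intro mult_case)
next
  case (div f g) then show ?case by (intro div_case)
qed

lemma alg_good: "alg f \<Longrightarrow> good f"
proof (coinduction arbitrary: f rule: good.coinduct)
  case (good f)
  then show ?case using alg_props[OF good] unfolding props_def by blast
qed

lemma dep_pt: assumes "depends_upto N f" shows "depends_upto N (pt f)"
  unfolding depends_upto_def pt_def
proof (intro allI impI)
  fix t :: real and u v :: "nat \<Rightarrow> real" assume uv: "\<forall>j\<le>N. u j = v j"
  have "\<forall>s. f s u = f s v" using assms uv unfolding depends_upto_def by blast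
  then show "deriv (\<lambda>s. f s u) t = deriv (\<lambda>s. f s v) t" by simp
qed


lemma dep_upd_const: assumes "depends_upto N f" "N < i"
  shows "(\<lambda>s. f t (u(i := s))) = (\<lambda>s. f t u)"
proof
  fix s
  have "\<forall>j\<le>N. (u(i := s)) j = u j" using assms(2) by auto
  then show "f t (u(i := s)) = f t u" using assms(1) unfolding depends_upto_def by blast
qed

lemma dep_px: assumes "depends_upto N f" shows "depends_upto N (px i f)"
  unfolding depends_upto_def px_def
proof (intro allI impI)
  fix t :: real and u v :: "nat \<Rightarrow> real" assume uv: "\<forall>j\<le>N. u j = v j"
  show "deriv (\<lambda>s. f t (u(i := s))) (u i) = deriv (\<lambda>s. f t (v(i := s))) (v i)"
  proof (cases "i \<le> N")
    case True
    have "f t (u(i := s)) = f t (v(i := s))" for s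
    proof -
      have "\<forall>j\<le>N. (u(i := s)) j = (v(i := s)) j" using uv by simp
      then show ?thesis using assms unfolding depends_upto_def by blast
    qed
    then have "(\<lambda>s. f t (u(i := s))) = (\<lambda>s. f t (v(i := s)))" by (rule ext)
    moreover have "u i = v i" using True uv by simp
    ultimately show ?thesis by simp
  next
    case False
    then have "N < i" by simp
    then show ?thesis using dep_upd_const[OF assms] d_const by simp
  qed
qed

lemma px_zero: assumes "depends_upto N f" "N < i" shows "px i f t u = 0"
  unfolding px_def dep_upd_const[OF assms] using d_const by simp

lemma Dt_fin: assumes "depends_upto N f" "N < M"
  shows "Dt f t u = pt f t u + (\<Sum>i<M. u (Suc i) * px i f t u)"
proof -
  have "(\<Sum>i. u (Suc i) * px i f t u) = (\<Sum>i<M. u (Suc i) * px i f t u)"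
    by (rule suminf_finite) (use assms px_zero in auto)
  then show ?thesis unfolding Dt_def by simp
qed

lemma jsmooth_D: "jsmooth f \<Longrightarrow> (\<forall>t u. (\<lambda>s. f s u) differentiable (at t)) \<and>
     (\<forall>i t u. (\<lambda>s. f t (u(i := s))) differentiable (at (u i))) \<and> jsmooth (pt f) \<and> (\<forall>i. jsmooth (px i f))"
  by (erule jsmooth.cases) simp

lemma jsmooth_good: assumes "jsmooth f" "depends_upto N f" shows "good f"
  using assms
proof (coinduction arbitrary: f N rule: good.coinduct)
  case (good f N)
  have j: "(\<forall>t u. (\<lambda>s. f s u) differentiable (at t))"
     "(\<forall>i t u. (\<lambda>s. f t (u(i := s))) differentiable (at (u i)))" "jsmooth (pt f)" "\<forall>i. jsmooth (px i f)"
    using jsmooth_D[OF good(1)] by blast+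
  have d: "depends_upto N (pt f)" "\<And>i. depends_upto N (px i f)" using dep_pt dep_px good(2) by blast+
  show ?case unfolding dep_def dift_def difx_def using j d good(2) by blast
qed

lemma alg_sum: fixes M :: nat shows "(\<And>i. alg (h i)) \<Longrightarrow> alg (\<lambda>t u. \<Sum>i<M. h i t u)"
proof (induction M)
  case 0 then show ?case using alg.const[of 0] by simp
next
  case (Suc M)
  have "alg (\<lambda>t u. (\<Sum>i<M. h i t u) + h M t u)" by (intro alg.add Suc)
  then show ?case by simp
qed

lemma alg_dep: "alg f \<Longrightarrow> \<exists>N. depends_upto N f"
  using alg_props unfolding props_def dep_def by blast

lemma alg_Dt: assumes "alg f" shows "alg (Dt f)"
proof -
  obtain N where N: "depends_upto N f" using alg_dep[OF assms] by blast
  have p: "alg (pt f)" "\<And>i. alg (px i f)" using alg_props[OF assms] unfolding props_def by blast+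
  have "Dt f = (\<lambda>t u. pt f t u + (\<Sum>i<Suc N. u (Suc i) * px i f t u))"
    using Dt_fin[OF N lessI] by (intro ext) (simp only:)
  moreover have "alg (\<lambda>t u. pt f t u + (\<Sum>i<Suc N. u (Suc i) * px i f t u))"
    by (intro alg.add p alg_sum alg.mult alg.coord)
  ultimately show ?thesis by simp
qed

lemma alg_common: assumes "alg f" "alg g"
  obtains N where "depends_upto N f" "depends_upto N g"
proof -
  obtain N1 N2 where "depends_upto N1 f" "depends_upto N2 g" using alg_dep assms by blast
  then show ?thesis using that dep_mono[of N1 f "max N1 N2"] dep_mono[of N2 g "max N1 N2"] by simp
qed

lemma alg_fx: "alg f \<Longrightarrow> dift f \<and> difx f"
  using alg_props unfolding props_def by blast

lemma Dt_add: assumes "alg f" "alg g" shows "Dt (\<lambda>t u. f t u + g t u) t u = Dt f t u + Dt g t u"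
proof -
  obtain N where N: "depends_upto N f" "depends_upto N g" using alg_common assms by blast
  have N3: "depends_upto N (\<lambda>t u. f t u + g t u)" using N unfolding depends_upto_def by metis
  note r = add_rule[of f g] alg_fx[OF assms(1)] alg_fx[OF assms(2)]
  show ?thesis unfolding Dt_fin[OF N3 lessI] Dt_fin[OF N(1) lessI] Dt_fin[OF N(2) lessI]
    using r by (simp add: sum.distrib algebra_simps)
qed

lemma Dt_diff: assumes "alg f" "alg g" shows "Dt (\<lambda>t u. f t u - g t u) t u = Dt f t u - Dt g t u"
proof -
  obtain N where N: "depends_upto N f" "depends_upto N g" using alg_common assms by blast
  have N3: "depends_upto N (\<lambda>t u. f t u - g t u)" using N unfolding depends_upto_def by metis
  note r = diff_rule[of f g] alg_fx[OF assms(1)] alg_fx[OF assms(2)]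
  show ?thesis unfolding Dt_fin[OF N3 lessI] Dt_fin[OF N(1) lessI] Dt_fin[OF N(2) lessI]
    using r by (simp add: sum_subtractf algebra_simps)
qed

lemma Dt_mult: assumes "alg f" "alg g" shows "Dt (\<lambda>t u. f t u * g t u) t u = Dt f t u * g t u + f t u * Dt g t u"
proof -
  obtain N where N: "depends_upto N f" "depends_upto N g" using alg_common assms by blast
  have N3: "depends_upto N (\<lambda>t u. f t u * g t u)" using N unfolding depends_upto_def by metis
  note r = mult_rule[of f g] alg_fx[OF assms(1)] alg_fx[OF assms(2)]
  show ?thesis unfolding Dt_fin[OF N3 lessI] Dt_fin[OF N(1) lessI] Dt_fin[OF N(2) lessI]
    using r by (simp add: sum.distrib sum_distrib_left sum_distrib_right algebra_simps)
qed

lemma Dt_const: "Dt (\<lambda>t u. c) t u = 0"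
proof -
  have "depends_upto 0 (\<lambda>t u. c)" unfolding depends_upto_def by simp
  then have "Dt (\<lambda>t u. c) t u = pt (\<lambda>t u. c) t u + (\<Sum>i<1. u (Suc i) * px i (\<lambda>t u. c) t u)"
    by (rule Dt_fin) simp
  then show ?thesis by (simp add: pt_const px_const)
qed

lemma Dt_coord: "Dt (\<lambda>t u. u k) t u = u (Suc k)"
proof -
  have "depends_upto k (\<lambda>t u. u k)" unfolding depends_upto_def by simp
  then have "Dt (\<lambda>t u. u k) t u = pt (\<lambda>t u. u k) t u + (\<Sum>i<Suc k. u (Suc i) * px i (\<lambda>t u. u k) t u)"
    by (rule Dt_fin) simp
  then have "Dt (\<lambda>t u. u k) t u = (\<Sum>i<Suc k. u (Suc i) * (if i = k then 1 else 0))"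
    by (simp add: pt_coord px_coord)
  also have "\<dots> = u (Suc k)" by (simp add: if_distrib sum.delta)
  finally show ?thesis .
qed

lemma lift3_dep: "depends_upto 1 (lift3 g)"
  unfolding depends_upto_def lift3_def
proof (intro allI impI)
  fix t :: real and u v :: "nat \<Rightarrow> real" assume "\<forall>i\<le>1. u i = v i"
  then have "u 0 = v 0" "u 1 = v 1" by auto
  then show "g t (u 0) (u 1) = g t (v 0) (v 1)" by simp
qed

lemma lift3_alg: "jsmooth (lift3 g) \<Longrightarrow> alg (lift3 g)"
  using jsmooth_good lift3_dep alg.base by blast

theorem corollary2p5:
  fixes n :: nat and F :: jfun and \<alpha> \<beta> \<gamma>1 :: "real \<Rightarrow> real \<Rightarrow> real \<Rightarrow> real"
  assumes n: "n \<ge> 2"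
    and F_dep: "depends_upto (n - 1) F" and F_smooth: "jsmooth F"
    and sm: "jsmooth (lift3 \<alpha>)" "jsmooth (lift3 \<beta>)" "jsmooth (lift3 \<gamma>1)"
    and nondeg: "\<And>t x x1. \<beta> t x x1 - \<alpha> t x x1 * x1 \<noteq> 0"
    and inv: "annihilates_on n F (lift3 \<alpha>)
                (tele (lift3 \<alpha>) (lift3 \<beta>) (lift3 \<gamma>1)) (eq_surface n F)"
  shows "annihilates_on n F (\<lambda>t u. 0)
           (lprol (\<lambda>t u. 0) (\<lambda>t u. 1)
              (\<lambda>t u. (\<gamma>1 t (u 0) (u 1) - \<alpha> t (u 0) (u 1) * u 2)
                     / (\<beta> t (u 0) (u 1) - \<alpha> t (u 0) (u 1) * u 1)))
           (eq_surface_prol n F)"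
proof -
  define A where "A = lift3 \<alpha>"
  define B where "B = lift3 \<beta>"
  define G where "G = lift3 \<gamma>1"
  have gA: "alg A" and gB: "alg B" and gG: "alg G"
    unfolding A_def B_def G_def using lift3_alg sm by blast+
  define T where "T = tele A B G"
  define Q :: jfun where "Q = (\<lambda>t u. B t u - A t u * u 1)"
  have Qnz: "Q t u \<noteq> 0" for t u unfolding Q_def A_def B_def lift3_def using nondeg by simp
  have gQ: "alg Q" unfolding Q_def by (intro alg.diff alg.mult gA gB alg.coord)
  define lam :: jfun where "lam = (\<lambda>t u. (\<gamma>1 t (u 0) (u 1) - \<alpha> t (u 0) (u 1) * u 2)
                     / (\<beta> t (u 0) (u 1) - \<alpha> t (u 0) (u 1) * u 1))"
  have lam_eq: "lam = (\<lambda>t u. (G t u - A t u * u 2) / Q t u)"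
    unfolding lam_def Q_def A_def B_def G_def lift3_def by simp
  have glam: "alg lam" unfolding lam_eq
    by (intro alg.div alg.diff alg.mult gA gG alg.coord gQ) (use Qnz in blast)
  define P where "P = lprol (\<lambda>t u. 0) (\<lambda>t u. 1) lam"
  have Psuc: "P (Suc k) = (\<lambda>t u. Dt (P k) t u + lam t u * P k t u)" for k
    unfolding P_def by (intro ext) (simp add: Dt_const)
  have key: "alg (P k) \<and> (\<forall>t u. T k t u - A t u * u (Suc k) = Q t u * P k t u)" for k
  proof (induction k)
    case 0
    have "P 0 = (\<lambda>t u. 1)" unfolding P_def by simp
    then show ?case unfolding T_def Q_def using alg.const[of 1] by simp
  next
    case (Suc k)
    show ?case
    proof (cases k)
      case 0
      have P1: "P (Suc 0) = lam" unfolding Psuc by (simp add: P_def Dt_const)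
      have "T (Suc 0) t u - A t u * u (Suc (Suc 0)) = Q t u * lam t u" for t u
        using Qnz[of t u] unfolding T_def lam_eq by (simp add: field_simps numeral_2_eq_2)
      then show ?thesis using P1 glam 0 by simp
    next
      case (Suc j)
      have IH1: "alg (P k)" and IH2: "\<And>t u. T k t u - A t u * u (Suc k) = Q t u * P k t u"
        using Suc.IH by blast+
      have Tk: "T k = (\<lambda>t u. Q t u * P k t u + A t u * u (Suc k))"
        using IH2 by (intro ext) (metis diff_eq_eq)
      have g1: "alg (\<lambda>t u. Q t u * P k t u)" by (intro alg.mult gQ IH1)
      have g2: "alg (\<lambda>t u. A t u * u (Suc k))" by (intro alg.mult gA alg.coord)
      have algS: "alg (P (Suc k))" unfolding Psuc by (intro alg.add alg.mult alg_Dt IH1 glam)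
      have eq: "T (Suc k) t u - A t u * u (Suc (Suc k)) = Q t u * P (Suc k) t u" for t u
      proof -
        have DtT: "Dt (T k) t u = (Dt Q t u * P k t u + Q t u * Dt (P k) t u)
             + (Dt A t u * u (Suc k) + A t u * u (Suc (Suc k)))"
          unfolding Tk Dt_add[OF g1 g2] Dt_mult[OF gQ IH1] Dt_mult[OF gA alg.coord] Dt_coord ..
        have g3: "alg (\<lambda>t u. A t u * u 1)" by (intro alg.mult gA alg.coord)
        have DtQ: "Dt Q t u = Dt B t u - (Dt A t u * u 1 + A t u * u 2)"
          unfolding Q_def Dt_diff[OF gB g3] Dt_mult[OF gA alg.coord] Dt_coord by (simp add: numeral_2_eq_2)
        have Ts: "T (Suc k) t u = Dt (T k) t u - Dt A t u * u (Suc k)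
           + (G t u + u 1 * Dt A t u - Dt B t u) / (B t u - u 1 * A t u) * (T k t u - A t u * u (Suc k))"
          unfolding T_def using Suc by simp
        have den: "B t u - u 1 * A t u = Q t u" unfolding Q_def by simp
        show ?thesis
          unfolding Ts DtT DtQ den IH2 Psuc lam_eq
          using Qnz[of t u] by (simp add: field_simps)
      qed
      show ?thesis using algS eq by blast
    qed
  qed
  have Teq: "T i t u = Q t u * P i t u + A t u * u (Suc i)" for i t u
    using key[of i] by (metis diff_eq_eq)
  have fin: "P n t u = (\<Sum>i<n. P i t u * px i F t u)" if h1: "u n = F t u" and h2: "u (Suc n) = Dt F t u" for t u
  proof -
    have invp: "T n t u = A t u * pt F t u + (\<Sum>i<n. T i t u * px i F t u)"
      using inv h1 unfolding annihilates_on_def eq_surface_def T_def A_def B_def G_def by auto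
    have DtF: "Dt F t u = pt F t u + (\<Sum>i<n. u (Suc i) * px i F t u)"
      by (rule Dt_fin[OF F_dep]) (use n in simp)
    have S: "(\<Sum>i<n. T i t u * px i F t u) = (\<Sum>i<n. Q t u * (P i t u * px i F t u) + A t u * (u (Suc i) * px i F t u))"
      by (rule sum.cong) (simp_all add: Teq algebra_simps)
    have "Q t u * P n t u = T n t u - A t u * u (Suc n)" using Teq[of n t u] by simp
    also have "\<dots> = Q t u * (\<Sum>i<n. P i t u * px i F t u)"
      unfolding invp h2 DtF S by (simp add: sum.distrib sum_distrib_left algebra_simps)
    finally show ?thesis using Qnz[of t u] by simp
  qed
  show ?thesis
    unfolding annihilates_on_def eq_surface_prol_def
    using fin unfolding P_def lam_def by auto
qed

end
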